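(* Let $T$ be the BFS tree produced by temporal BFS on a temporal graph $G=(V,E)$ from source $s$ with starting time $t_s$, let $v\neq s$ be a vertex reachable from $s$, and let $v_o$ be the occurrence of $v$ in $T$ of smallest level (the first occurrence of $v$). Then the level of $v_o$ equals $dist(s,v)$, the minimum number of hops of a temporal path from $s$ to $v$ starting at or after $t_s$.
   Context: A temporal graph is a pair $G=(V,E)$ where $V$ is a finite set of vertices and $E$ is a finite set of temporal edges, i.e. triples $(u,v,t)$ with $u,v\in V$, $u\neq v$, $t\in\mathbb{R}$ (the time at which the edge is active); distinct elements of $E$ are distinct triples. Fix $t_s\in\mathbb{R}$ and $s\in V$. A temporal path from $x$ to $y$ (starting at or after $t_s$) is a sequence $P=\langle (w_1,w_2,t_1),\dots,(w_k,w_{k+1},t_k)\rangle$ of $k\ge1$ edges of $E$ with $w_1=x$, $w_{k+1}=y$ and $t_s\le t_1\le t_2\le\dots\le t_k$; its number of hops is $k$. A vertex $y$ is reachable from $s$ if such a path from $s$ to $y$ exists. Temporal BFS. Records are tuples $(x,d,\tau,p)$ (vertex $x$, level $d$, time $\tau$, predecessor record $p$ or none); every record ever created is an occurrence (node) of the BFS tree $T$, rooted at the initial record, with a tree edge from the predecessor record to the record; the level and time of an occurrence are the final values of its fields. For each $x\in V$ a current value $\sigma(x)$ is kept, initially $\infty$, and set to $\tau$ whenever a record of $x$ is created or its time is updated to $\tau$. Initially the FIFO queue $Q$ contains only $(s,0,t_s,\text{none})$ and $\sigma(s)=t_s$; no edge is traversed. While $Q\neq\emptyset$: pop the front record $R=(u,d_u,\sigma_u,p_u)$;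 let $B$ be the set of edges $(u,v,t)\in E$ not yet traversed with $\sigma_u\le t$; for each vertex $v$ such that $B$ contains an edge to $v$ (in any order), let $e=(u,v,t)$ be the edge of $B$ to $v$ with smallest $t$, mark $e$ traversed, and: (i) if $Q$ contains no record of $v$ and $\sigma(v)>t$, create $(v,d_u+1,t,R)$ and append it to $Q$; (ii) if $Q$ contains a record of $v$ with level $d_u+1$ and $\sigma(v)>t$, set that record's time to $t$ and predecessor to $R$; (iii) if $Q$ contains a record of $v$ but none with level $d_u+1$, and $\sigma(v)>t$, create $(v,d_u+1,t,R)$ and append it to $Q$. *)

theory Defs
  imports Main "HOL-Library.Extended_Real"
begin

type_synonym 'v tedge = "'v \<times> 'v \<times> real"

definition esrc :: "'v tedge \<Rightarrow> 'v" where "esrc e = fst e"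
definition etgt :: "'v tedge \<Rightarrow> 'v" where "etgt e = fst (snd e)"
definition etime :: "'v tedge \<Rightarrow> real" where "etime e = snd (snd e)"

definition temporal_path :: "'v tedge set \<Rightarrow> real \<Rightarrow> 'v \<Rightarrow> 'v \<Rightarrow> 'v tedge list \<Rightarrow> bool" where
  "temporal_path E ts x y P \<longleftrightarrow>
     P \<noteq> [] \<and> set P \<subseteq> E \<and> esrc (hd P) = x \<and> etgt (last P) = y \<and> ts \<le> etime (hd P) \<and>
     (\<forall>i. Suc i < length P \<longrightarrow> etgt (P ! i) = esrc (P ! Suc i) \<and> etime (P ! i) \<le> etime (P ! Suc i))"

definition t_reachable :: "'v tedge set \<Rightarrow> real \<Rightarrow> 'v \<Rightarrow> 'v \<Rightarrow> bool" where
  "t_reachable E ts x y \<longleftrightarrow> (\<exists>P. temporal_path E ts x y P)"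

definition tdist :: "'v tedge set \<Rightarrow> real \<Rightarrow> 'v \<Rightarrow> 'v \<Rightarrow> nat" where
  "tdist E ts x y = (LEAST k. \<exists>P. temporal_path E ts x y P \<and> length P = k)"

text \<open>BFS records (occurrences), identified by their index in the list of all records ever created.\<close>
record 'v bfs_rec =
  rv :: 'v
  rlev :: nat
  rtime :: real
  rpred :: "nat option"

record 'v bfs_state =
  recs :: "'v bfs_rec list"
  que :: "nat list"
  sig :: "'v \<Rightarrow> ereal"
  trav :: "'v tedge set"

definition bfs_init :: "'v \<Rightarrow> real \<Rightarrow> 'v bfs_state" where
  "bfs_init s ts = \<lparr>recs = [\<lparr>rv = s, rlev = 0, rtime = ts, rpred = None\<rparr>], que = [0],
                     sig = (\<lambda>x. \<infinity>)(s := ereal ts), trav = {}\<rparr>"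

definition Bset :: "'v tedge set \<Rightarrow> 'v bfs_state \<Rightarrow> nat \<Rightarrow> 'v tedge set" where
  "Bset E S r = {e \<in> E. e \<notin> trav S \<and> esrc e = rv (recs S ! r) \<and> rtime (recs S ! r) \<le> etime e}"

definition targets :: "'v tedge set \<Rightarrow> 'v set" where
  "targets B = etgt ` B"

definition mintime :: "'v tedge set \<Rightarrow> 'v \<Rightarrow> real" where
  "mintime B v = Min (etime ` {e \<in> B. etgt e = v})"

definition process :: "'v tedge set \<Rightarrow> nat \<Rightarrow> 'v \<Rightarrow> 'v bfs_state \<Rightarrow> 'v bfs_state" where
  "process B r v S =
    (let R = recs S ! r; t = mintime B v; d = Suc (rlev R);
         S1 = S\<lparr>trav := insert (rv R, v, t) (trav S)\<rparr>;
         inQ = {i \<in> set (que S). rv (recs S ! i) = v};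
         inQd = {i \<in> inQ. rlev (recs S ! i) = d};
         create = S1\<lparr>recs := recs S @ [\<lparr>rv = v, rlev = d, rtime = t, rpred = Some r\<rparr>],
                     que := que S @ [length (recs S)], sig := (sig S)(v := ereal t)\<rparr>;
         update = S1\<lparr>recs := map (\<lambda>i. if i \<in> inQd then (recs S ! i)\<lparr>rtime := t, rpred := Some r\<rparr>
                                      else recs S ! i) [0..<length (recs S)],
                     sig := (sig S)(v := ereal t)\<rparr>
     in if \<not> (sig S v > ereal t) then S1
        else if inQ = {} then create
        else if inQd \<noteq> {} then update
        else create)"

definition bfs_step :: "'v tedge set \<Rightarrow> 'v bfs_state \<Rightarrow> 'v bfs_state \<Rightarrow> bool" where
  "bfs_step E S S' \<longleftrightarrow>
     (\<exists>r rest vs. que S = r # rest \<and> distinct vs \<and> set vs = targets (Bset E S r) \<and>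
        S' = fold (process (Bset E S r) r) vs (S\<lparr>que := rest\<rparr>))"

definition occ_levels :: "'v bfs_state \<Rightarrow> 'v \<Rightarrow> nat set" where
  "occ_levels S v = {rlev (recs S ! i) | i. i < length (recs S) \<and> rv (recs S ! i) = v}"

end

theory Submission imports Defs begin

definition good :: "'v tedge set \<Rightarrow> real \<Rightarrow> 'v \<Rightarrow> nat \<Rightarrow> 'v \<Rightarrow> real \<Rightarrow> bool" where
 "good E ts s d x \<tau> \<longleftrightarrow> (d = 0 \<and> x = s \<and> ts \<le> \<tau>) \<or>
    (\<exists>P. temporal_path E ts s x P \<and> length P = d \<and> etime (last P) \<le> \<tau>)"

lemma good_ext:
  assumes g: "good E ts s d u \<tau>" and e: "(u,x,t) \<in> E" and le: "\<tau> \<le> t"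
  shows "good E ts s (Suc d) x t"
  using g[unfolded good_def]
proof (elim disjE exE conjE)
  assume "d = 0" "u = s" "ts \<le> \<tau>"
  then have "temporal_path E ts s x [(u,x,t)]" using e le
    by (simp add: temporal_path_def esrc_def etgt_def etime_def)
  moreover have "length [(u,x,t)] = Suc d" "etime (last [(u,x,t)]) \<le> t"
    using \<open>d=0\<close> by (auto simp: etime_def)
  ultimately show ?thesis unfolding good_def by blast
next
  fix P assume P: "temporal_path E ts s u P" "length P = d" "etime (last P) \<le> \<tau>"
  let ?Q = "P @ [(u,x,t)]"
  have ne: "P \<noteq> []" using P unfolding temporal_path_def by auto
  have "temporal_path E ts s x ?Q"
    unfolding temporal_path_def
  proof (intro conjI allI impI)
    show "?Q \<noteq> []" by simp
    show "set ?Q \<subseteq> E" using P e unfolding temporal_path_def by auto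
    show "esrc (hd ?Q) = s" "ts \<le> etime (hd ?Q)" using P ne unfolding temporal_path_def by auto
    show "etgt (last ?Q) = x" by (simp add: etgt_def)
    fix i assume i: "Suc i < length ?Q"
    have "etgt (?Q ! i) = esrc (?Q ! Suc i) \<and> etime (?Q ! i) \<le> etime (?Q ! Suc i)"
    proof (cases "Suc i < length P")
      case True
      then show ?thesis using P unfolding temporal_path_def by (auto simp: nth_append)
    next
      case False
      then have "Suc i = length P" using i by simp
      then have a: "?Q ! i = last P" "?Q ! Suc i = (u,x,t)"
        using ne by (auto simp: nth_append last_conv_nth simp flip: \<open>Suc i = length P\<close>)
      show ?thesis unfolding a using P le unfolding temporal_path_def
        by (auto simp: esrc_def etime_def)
    qed
    then show "etgt (?Q ! i) = esrc (?Q ! Suc i)" "etime (?Q ! i) \<le> etime (?Q ! Suc i)" by auto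
  qed
  moreover have "length ?Q = Suc d" "etime (last ?Q) \<le> t"
    using P by (auto simp: etime_def)
  ultimately show ?thesis unfolding good_def by blast
qed

lemma process_cases:
  fixes B r v S
  defines "P \<equiv> process B r v S"
  defines "t \<equiv> mintime B v" and "d \<equiv> Suc (rlev (recs S ! r))"
  defines "inQd \<equiv> {i \<in> set (que S). rv (recs S ! i) = v \<and> rlev (recs S ! i) = d}"
  shows "trav P = insert (rv (recs S ! r), v, t) (trav S) \<and>
   ((\<not> sig S v > ereal t \<and> recs P = recs S \<and> que P = que S \<and> sig P = sig S)
  \<or> (sig S v > ereal t \<and> recs P = recs S @ [\<lparr>rv = v, rlev = d, rtime = t, rpred = Some r\<rparr>]
       \<and> que P = que S @ [length (recs S)] \<and> sig P = (sig S)(v := ereal t))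
  \<or> (sig S v > ereal t \<and> inQd \<noteq> {} \<and>
       recs P = map (\<lambda>i. if i \<in> inQd then (recs S ! i)\<lparr>rtime := t, rpred := Some r\<rparr> else recs S ! i) [0..<length (recs S)]
       \<and> que P = que S \<and> sig P = (sig S)(v := ereal t)))"
proof -
  have eq: "{i \<in> {i \<in> set (que S). rv (recs S ! i) = v}. rlev (recs S ! i) = d} = inQd"
    unfolding inQd_def by auto
  show ?thesis
    unfolding P_def process_def Let_def eq[unfolded d_def] t_def[symmetric] d_def[symmetric]
    by (auto simp: inQd_def)
qed

definition Dp :: "'v bfs_state \<Rightarrow> bool" where
  "Dp S \<longleftrightarrow> (\<forall>x t. sig S x \<le> ereal t \<longrightarrow> (\<exists>j<length (recs S). rv (recs S ! j) = x \<and> rtime (recs S ! j) \<le> t))"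
definition Gp :: "'v bfs_state \<Rightarrow> bool" where
  "Gp S \<longleftrightarrow> (\<forall>i<length (recs S). sig S (rv (recs S ! i)) \<le> ereal (rtime (recs S ! i)))"
definition Fp :: "'v bfs_state \<Rightarrow> bool" where
  "Fp S \<longleftrightarrow> (\<forall>e\<in>trav S. sig S (etgt e) \<le> ereal (etime e))"
definition Cr :: "'v tedge set \<Rightarrow> 'v bfs_state \<Rightarrow> nat \<Rightarrow> bool" where
  "Cr E S r \<longleftrightarrow> (\<forall>e\<in>E. esrc e = rv (recs S ! r) \<and> rtime (recs S ! r) \<le> etime e \<longrightarrow>
     (\<exists>j<length (recs S). rv (recs S ! j) = etgt e \<and> rlev (recs S ! j) \<le> Suc (rlev (recs S ! r))
        \<and> rtime (recs S ! j) \<le> etime e))"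
definition Sound :: "'v tedge set \<Rightarrow> real \<Rightarrow> 'v \<Rightarrow> 'v bfs_state \<Rightarrow> bool" where
  "Sound E ts s S \<longleftrightarrow> (\<forall>i<length (recs S). good E ts s (rlev (recs S ! i)) (rv (recs S ! i)) (rtime (recs S ! i)))"
definition root :: "'v \<Rightarrow> real \<Rightarrow> 'v bfs_rec" where
  "root s ts = \<lparr>rv = s, rlev = 0, rtime = ts, rpred = None\<rparr>"

definition inv :: "'v tedge set \<Rightarrow> real \<Rightarrow> 'v \<Rightarrow> 'v bfs_state \<Rightarrow> bool" where
  "inv E ts s S \<longleftrightarrow> recs S \<noteq> [] \<and> recs S ! 0 = root s ts \<and>
    distinct (que S) \<and> (\<forall>q\<in>set (que S). q < length (recs S)) \<and> Sound E ts s S \<and>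
    sorted (map (\<lambda>q. rlev (recs S ! q)) (que S)) \<and>
    (\<forall>k<length (recs S). \<forall>q\<in>set (que S). rlev (recs S ! k) \<le> Suc (rlev (recs S ! q))) \<and>
    Dp S \<and> Gp S \<and> Fp S \<and> (\<forall>i<length (recs S). i \<notin> set (que S) \<longrightarrow> Cr E S i)"

definition J :: "'v tedge set \<Rightarrow> real \<Rightarrow> 'v \<Rightarrow> nat \<Rightarrow> 'v bfs_rec \<Rightarrow> 'v bfs_state \<Rightarrow> bool" where
  "J E ts s r R0 S \<longleftrightarrow> recs S \<noteq> [] \<and> recs S ! 0 = root s ts \<and>
    distinct (que S) \<and> (\<forall>q\<in>set (que S). q < length (recs S)) \<and>
    r < length (recs S) \<and> r \<notin> set (que S) \<and> recs S ! r = R0 \<and> Sound E ts s S \<and>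
    sorted (map (\<lambda>q. rlev (recs S ! q)) (que S)) \<and>
    (\<forall>k<length (recs S). rlev (recs S ! k) \<le> Suc (rlev R0)) \<and>
    (\<forall>q\<in>set (que S). rlev R0 \<le> rlev (recs S ! q)) \<and>
    Dp S \<and> Gp S \<and> Fp S \<and> (\<forall>i<length (recs S). i \<noteq> r \<and> i \<notin> set (que S) \<longrightarrow> Cr E S i)"

lemma mintime_ex:
  assumes "finite B" "v \<in> targets B"
  shows "\<exists>e\<in>B. etgt e = v \<and> etime e = mintime B v"
proof -
  have "finite (etime ` {e \<in> B. etgt e = v})" "etime ` {e \<in> B. etgt e = v} \<noteq> {}"
    using assms by (auto simp: targets_def)
  then have "mintime B v \<in> etime ` {e \<in> B. etgt e = v}" unfolding mintime_def by (rule Min_in)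
  then show ?thesis by auto
qed

lemma mintime_le:
  assumes "finite B" "e \<in> B"
  shows "mintime B (etgt e) \<le> etime e"
  unfolding mintime_def using assms by (intro Min_le) auto

lemma J_process:
  assumes J: "J E ts s r R0 S" and fin: "finite E"
    and vB: "v \<in> targets B" and B: "B \<subseteq> {e\<in>E. esrc e = rv R0 \<and> rtime R0 \<le> etime e}"
  shows "J E ts s r R0 (process B r v S)"
proof -
  define t where "t = mintime B v"
  define d where "d = Suc (rlev (recs S ! r))"
  define inQd where "inQd = {i \<in> set (que S). rv (recs S ! i) = v \<and> rlev (recs S ! i) = d}"
  define P where "P = process B r v S"
  have R0: "recs S ! r = R0" "r < length (recs S)" using J unfolding J_def by auto
  have "B \<subseteq> E" using B by auto
  then have "finite B" using fin by (rule finite_subset)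
  then obtain e where e: "e \<in> B" "etgt e = v" "etime e = t" using mintime_ex[OF _ vB] t_def by auto
  have ee: "e = (esrc e, etgt e, etime e)" by (simp add: esrc_def etgt_def etime_def)
  have eB: "e \<in> E" "esrc e = rv R0" "rtime R0 \<le> etime e" using e(1) B by auto
  have eE: "(rv R0, v, t) \<in> E" "rtime R0 \<le> t" using eB ee e by auto
  have gR0: "good E ts s (rlev R0) (rv R0) (rtime R0)"
    using J R0 unfolding J_def Sound_def by metis
  have key: "good E ts s d v t" unfolding d_def R0(1) using good_ext[OF gR0 eE(1) eE(2)] .
  have pc: "trav P = insert (rv R0, v, t) (trav S) \<and>
   ((\<not> sig S v > ereal t \<and> recs P = recs S \<and> que P = que S \<and> sig P = sig S)
  \<or> (sig S v > ereal t \<and> recs P = recs S @ [\<lparr>rv = v, rlev = d, rtime = t, rpred = Some r\<rparr>]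
       \<and> que P = que S @ [length (recs S)] \<and> sig P = (sig S)(v := ereal t))
  \<or> (sig S v > ereal t \<and> inQd \<noteq> {} \<and>
       recs P = map (\<lambda>i. if i \<in> inQd then (recs S ! i)\<lparr>rtime := t, rpred := Some r\<rparr> else recs S ! i) [0..<length (recs S)]
       \<and> que P = que S \<and> sig P = (sig S)(v := ereal t)))"
    using process_cases[of B r v S] unfolding P_def t_def d_def inQd_def R0(1) by simp
  then have tr: "trav P = insert (rv R0, v, t) (trav S)" by simp
  have Jd: "recs S \<noteq> []" "recs S ! 0 = root s ts" "distinct (que S)"
    "\<forall>q\<in>set (que S). q < length (recs S)" "r \<notin> set (que S)" "Sound E ts s S"
    "sorted (map (\<lambda>q. rlev (recs S ! q)) (que S))"
    "\<forall>k<length (recs S). rlev (recs S ! k) \<le> Suc (rlev R0)"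
    "\<forall>q\<in>set (que S). rlev R0 \<le> rlev (recs S ! q)" "Dp S" "Gp S" "Fp S"
    "\<forall>i<length (recs S). i \<noteq> r \<and> i \<notin> set (que S) \<longrightarrow> Cr E S i"
    using J unfolding J_def by auto
  have dd: "d = Suc (rlev R0)" using d_def R0 by simp
  from pc have "J E ts s r R0 P"
  proof (elim conjE disjE)
    assume a: "\<not> sig S v > ereal t" "recs P = recs S" "que P = que S" "sig P = sig S"
    have "Fp P" using J a tr unfolding J_def Fp_def by (auto simp: etgt_def etime_def not_less)
    then show "J E ts s r R0 P" using J unfolding J_def Dp_def Gp_def Cr_def Sound_def a(2,3,4) by simp
  next
    assume a: "sig S v > ereal t" "recs P = recs S @ [\<lparr>rv = v, rlev = d, rtime = t, rpred = Some r\<rparr>]"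
       "que P = que S @ [length (recs S)]" "sig P = (sig S)(v := ereal t)"
    define n where "n = length (recs S)"
    define N where "N = \<lparr>rv = v, rlev = d, rtime = t, rpred = Some r\<rparr>"
    have len: "length (recs P) = Suc n" using a n_def by simp
    have nth: "\<And>i. i < n \<Longrightarrow> recs P ! i = recs S ! i" "recs P ! n = N"
      using a n_def N_def by (auto simp: nth_append)
    have qn: "que P = que S @ [n]" using a n_def by simp
    have bnd: "\<forall>q\<in>set (que S). q < n" using Jd n_def by simp
    have c1: "recs P \<noteq> [] \<and> recs P ! 0 = root s ts" using nth(1)[of 0] Jd len n_def by auto
    have c2: "distinct (que P) \<and> (\<forall>q\<in>set (que P). q < length (recs P))"
      using Jd(3) bnd unfolding qn len by auto
    have c3: "r < length (recs P) \<and> r \<notin> set (que P) \<and> recs P ! r = R0"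
      using R0 Jd(5) nth(1)[of r] unfolding qn len n_def by auto
    have c4: "Sound E ts s P"
      unfolding Sound_def len
    proof (intro allI impI)
      fix i assume "i < Suc n"
      then consider "i < n" | "i = n" by linarith
      then show "good E ts s (rlev (recs P ! i)) (rv (recs P ! i)) (rtime (recs P ! i))"
      proof cases
        case 1 then show ?thesis using Jd(6) nth(1) n_def unfolding Sound_def by auto
      next
        case 2 then show ?thesis using key nth(2) N_def by simp
      qed
    qed
    have mq: "map (\<lambda>q. rlev (recs P ! q)) (que S) = map (\<lambda>q. rlev (recs S ! q)) (que S)"
      using bnd nth(1) by auto
    have c5: "sorted (map (\<lambda>q. rlev (recs P ! q)) (que P))"
      unfolding qn using Jd(7) Jd(8) bnd nth n_def dd N_def by (auto simp: mq sorted_append)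
    have c6: "\<forall>k<length (recs P). rlev (recs P ! k) \<le> Suc (rlev R0)"
      unfolding len using Jd(8) nth n_def dd N_def by (auto simp: less_Suc_eq)
    have c7: "\<forall>q\<in>set (que P). rlev R0 \<le> rlev (recs P ! q)"
      unfolding qn using Jd(9) nth bnd dd N_def by auto
    have sigle: "\<And>y. sig P y \<le> sig S y" using a(1) unfolding a(4) by (auto intro: less_imp_le)
    have c8: "Dp P" unfolding Dp_def
    proof (intro allI impI)
      fix x t' assume h: "sig P x \<le> ereal t'"
      show "\<exists>j<length (recs P). rv (recs P ! j) = x \<and> rtime (recs P ! j) \<le> t'"
      proof (cases "x = v")
        case True
        then have "t \<le> t'" using h a(4) by simp
        then show ?thesis using True nth(2) len N_def by (intro exI[of _ n]) auto
      next
        case False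
        then have "sig S x \<le> ereal t'" using h a(4) by simp
        then obtain j where "j < n" "rv (recs S ! j) = x" "rtime (recs S ! j) \<le> t'"
          using Jd(10) n_def unfolding Dp_def by blast
        then show ?thesis using nth(1) len by (intro exI[of _ j]) auto
      qed
    qed
    have c9: "Gp P" unfolding Gp_def len
    proof (intro allI impI)
      fix i assume "i < Suc n"
      then consider "i < n" | "i = n" by linarith
      then show "sig P (rv (recs P ! i)) \<le> ereal (rtime (recs P ! i))"
      proof cases
        case 1
        have g: "sig S (rv (recs S ! i)) \<le> ereal (rtime (recs S ! i))"
          using Jd(11) 1 n_def unfolding Gp_def by auto
        show ?thesis using 1 nth(1) sigle[of "rv (recs S ! i)"] g by (metis order_trans)
      next
        case 2 then show ?thesis using nth(2) a(4) N_def by simp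
      qed
    qed
    have c10: "Fp P" unfolding Fp_def
    proof
      fix e' assume "e' \<in> trav P"
      then have "e' = (rv R0, v, t) \<or> e' \<in> trav S" using tr by simp
      then show "sig P (etgt e') \<le> ereal (etime e')"
      proof
        assume "e' = (rv R0, v, t)" then show ?thesis using a(4) by (simp add: etgt_def etime_def)
      next
        assume "e' \<in> trav S"
        then have "sig S (etgt e') \<le> ereal (etime e')" using Jd(12) unfolding Fp_def by auto
        then show ?thesis using sigle by (metis order_trans)
      qed
    qed
    have c11: "\<forall>i<length (recs P). i \<noteq> r \<and> i \<notin> set (que P) \<longrightarrow> Cr E P i"
    proof (intro allI impI)
      fix i assume h: "i < length (recs P)" "i \<noteq> r \<and> i \<notin> set (que P)"
      then have i: "i < n" "i \<notin> set (que S)" unfolding len qn by auto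
      then have C: "Cr E S i" using Jd(13) h n_def by auto
      show "Cr E P i" unfolding Cr_def
      proof (intro ballI impI)
        fix e' assume "e' \<in> E" "esrc e' = rv (recs P ! i) \<and> rtime (recs P ! i) \<le> etime e'"
        then obtain j where "j < n" "rv (recs S ! j) = etgt e'" "rlev (recs S ! j) \<le> Suc (rlev (recs S ! i))"
          "rtime (recs S ! j) \<le> etime e'"
          using C nth(1)[OF i(1)] n_def unfolding Cr_def by auto
        then show "\<exists>j<length (recs P). rv (recs P ! j) = etgt e' \<and> rlev (recs P ! j) \<le> Suc (rlev (recs P ! i))
          \<and> rtime (recs P ! j) \<le> etime e'"
          using nth(1) i(1) len by (intro exI[of _ j]) auto
      qed
    qed
    show "J E ts s r R0 P" unfolding J_def using c1 c2 c3 c4 c5 c6 c7 c8 c9 c10 c11 by blast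
  next
    assume a: "sig S v > ereal t" "inQd \<noteq> {}"
       "recs P = map (\<lambda>i. if i \<in> inQd then (recs S ! i)\<lparr>rtime := t, rpred := Some r\<rparr> else recs S ! i) [0..<length (recs S)]"
       "que P = que S" "sig P = (sig S)(v := ereal t)"
    define n where "n = length (recs S)"
    have len: "length (recs P) = n" using a n_def by simp
    have nth: "\<And>i. i < n \<Longrightarrow> recs P ! i = (if i \<in> inQd then (recs S ! i)\<lparr>rtime := t, rpred := Some r\<rparr> else recs S ! i)"
      using a(3) n_def by simp
    have bnd: "\<forall>q\<in>set (que S). q < n" using Jd n_def by simp
    have sigle: "\<And>y. sig P y \<le> sig S y" using a(1) unfolding a(5) by (auto intro: less_imp_le)
    have same: "\<And>i. i < n \<Longrightarrow> rv (recs P ! i) = rv (recs S ! i) \<and> rlev (recs P ! i) = rlev (recs S ! i)"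
      using nth by simp
    have tle: "\<And>i. i < n \<Longrightarrow> rtime (recs P ! i) \<le> rtime (recs S ! i)"
    proof -
      fix i assume i: "i < n"
      show "rtime (recs P ! i) \<le> rtime (recs S ! i)"
      proof (cases "i \<in> inQd")
        case True
        then have "rv (recs S ! i) = v" unfolding inQd_def by simp
        then have "sig S v \<le> ereal (rtime (recs S ! i))" using Jd(11) i n_def unfolding Gp_def by metis
        then have "ereal t < ereal (rtime (recs S ! i))" using a(1) by (metis less_le_trans)
        then show ?thesis using nth[OF i] True by simp
      next
        case False then show ?thesis using nth[OF i] by simp
      qed
    qed
    have notq: "\<And>i. i < n \<Longrightarrow> i \<notin> set (que S) \<Longrightarrow> recs P ! i = recs S ! i"
      using nth unfolding inQd_def by simp
    have inq: "\<And>i. i < n \<Longrightarrow> i \<in> inQd \<Longrightarrow> rv (recs P ! i) = v \<and> rlev (recs P ! i) = d \<and> rtime (recs P ! i) = t"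
      using nth unfolding inQd_def by simp
    have c1: "recs P \<noteq> [] \<and> recs P ! 0 = root s ts"
    proof -
      have "0 < n" using Jd(1) n_def by simp
      moreover have "0 \<notin> inQd" using Jd(2) unfolding inQd_def d_def root_def by auto
      ultimately show ?thesis using nth[of 0] Jd(2) len by auto
    qed
    have c2: "distinct (que P) \<and> (\<forall>q\<in>set (que P). q < length (recs P))"
      using Jd(3) bnd unfolding a(4) len by auto
    have c3: "r < length (recs P) \<and> r \<notin> set (que P) \<and> recs P ! r = R0"
      using R0 Jd(5) notq[of r] unfolding a(4) len n_def by auto
    have c4: "Sound E ts s P"
      unfolding Sound_def len
    proof (intro allI impI)
      fix i assume i: "i < n"
      show "good E ts s (rlev (recs P ! i)) (rv (recs P ! i)) (rtime (recs P ! i))"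
      proof (cases "i \<in> inQd")
        case True then show ?thesis using inq[OF i] key by simp
      next
        case False then show ?thesis using Jd(6) nth[OF i] i n_def unfolding Sound_def by auto
      qed
    qed
    have mq: "map (\<lambda>q. rlev (recs P ! q)) (que S) = map (\<lambda>q. rlev (recs S ! q)) (que S)"
      using bnd same by auto
    have c5: "sorted (map (\<lambda>q. rlev (recs P ! q)) (que P))"
      unfolding a(4) mq using Jd(7) .
    have c6: "\<forall>k<length (recs P). rlev (recs P ! k) \<le> Suc (rlev R0)"
      unfolding len using Jd(8) same n_def by auto
    have c7: "\<forall>q\<in>set (que P). rlev R0 \<le> rlev (recs P ! q)"
      unfolding a(4) using Jd(9) same bnd by auto
    have c8: "Dp P" unfolding Dp_def
    proof (intro allI impI)
      fix x t' assume h: "sig P x \<le> ereal t'"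
      show "\<exists>j<length (recs P). rv (recs P ! j) = x \<and> rtime (recs P ! j) \<le> t'"
      proof (cases "x = v")
        case True
        then have "t \<le> t'" using h a(5) by simp
        obtain i where i: "i \<in> inQd" using a(2) by auto
        then have "i < n" using bnd unfolding inQd_def by auto
        then show ?thesis using True inq[OF _ i] \<open>t \<le> t'\<close> len by (intro exI[of _ i]) auto
      next
        case False
        then have "sig S x \<le> ereal t'" using h a(5) by simp
        then obtain j where "j < n" "rv (recs S ! j) = x" "rtime (recs S ! j) \<le> t'"
          using Jd(10) n_def unfolding Dp_def by blast
        then show ?thesis using same tle len by (intro exI[of _ j]) (auto intro: order_trans)
      qed
    qed
    have c9: "Gp P" unfolding Gp_def len
    proof (intro allI impI)
      fix i assume i: "i < n"
      show "sig P (rv (recs P ! i)) \<le> ereal (rtime (recs P ! i))"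
      proof (cases "i \<in> inQd")
        case True then show ?thesis using inq[OF i] a(5) by simp
      next
        case False
        have g: "sig S (rv (recs S ! i)) \<le> ereal (rtime (recs S ! i))"
          using Jd(11) i n_def unfolding Gp_def by auto
        show ?thesis using False nth[OF i] sigle[of "rv (recs S ! i)"] g by (metis order_trans)
      qed
    qed
    have c10: "Fp P" unfolding Fp_def
    proof
      fix e' assume "e' \<in> trav P"
      then have "e' = (rv R0, v, t) \<or> e' \<in> trav S" using tr by simp
      then show "sig P (etgt e') \<le> ereal (etime e')"
      proof
        assume "e' = (rv R0, v, t)" then show ?thesis using a(5) by (simp add: etgt_def etime_def)
      next
        assume "e' \<in> trav S"
        then have "sig S (etgt e') \<le> ereal (etime e')" using Jd(12) unfolding Fp_def by auto
        then show ?thesis using sigle by (metis order_trans)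
      qed
    qed
    have c11: "\<forall>i<length (recs P). i \<noteq> r \<and> i \<notin> set (que P) \<longrightarrow> Cr E P i"
    proof (intro allI impI)
      fix i assume h: "i < length (recs P)" "i \<noteq> r \<and> i \<notin> set (que P)"
      then have i: "i < n" "i \<notin> set (que S)" unfolding len a(4) by auto
      then have C: "Cr E S i" using Jd(13) h n_def by auto
      have ri: "recs P ! i = recs S ! i" using notq i by simp
      show "Cr E P i" unfolding Cr_def
      proof (intro ballI impI)
        fix e' assume "e' \<in> E" "esrc e' = rv (recs P ! i) \<and> rtime (recs P ! i) \<le> etime e'"
        then obtain j where "j < n" "rv (recs S ! j) = etgt e'" "rlev (recs S ! j) \<le> Suc (rlev (recs S ! i))"
          "rtime (recs S ! j) \<le> etime e'"
          using C ri n_def unfolding Cr_def by auto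
        then show "\<exists>j<length (recs P). rv (recs P ! j) = etgt e' \<and> rlev (recs P ! j) \<le> Suc (rlev (recs P ! i))
          \<and> rtime (recs P ! j) \<le> etime e'"
          using same tle ri len by (intro exI[of _ j]) (auto intro: order_trans)
      qed
    qed
    show "J E ts s r R0 P" unfolding J_def using c1 c2 c3 c4 c5 c6 c7 c8 c9 c10 c11 by blast
  qed
  then show ?thesis by (simp add: P_def)
qed

lemma process_sig:
  "sig (process B r v S) y \<le> sig S y" "sig (process B r v S) v \<le> ereal (mintime B v)"
  using process_cases[of B r v S] by (auto intro: less_imp_le simp: not_less)

lemma fold_J:
  assumes "J E ts s r R0 S" "finite E" "set vs \<subseteq> targets B"
    "B \<subseteq> {e\<in>E. esrc e = rv R0 \<and> rtime R0 \<le> etime e}"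
  shows "J E ts s r R0 (fold (process B r) vs S)"
  using assms
proof (induction vs arbitrary: S)
  case Nil then show ?case by simp
next
  case (Cons x vs)
  have "J E ts s r R0 (process B r x S)" using J_process Cons.prems by auto
  then show ?case using Cons by simp
qed

lemma fold_sig_mono: "sig (fold (process B r) vs S) y \<le> sig S y"
proof (induction vs arbitrary: S)
  case Nil then show ?case by simp
next
  case (Cons x vs)
  then show ?case using process_sig(1)[of B r x S y] by (metis fold_Cons comp_apply order_trans)
qed

lemma fold_sig_v: "v \<in> set vs \<Longrightarrow> sig (fold (process B r) vs S) v \<le> ereal (mintime B v)"
proof (induction vs arbitrary: S)
  case Nil then show ?case by simp
next
  case (Cons x vs)
  show ?case
  proof (cases "v \<in> set vs")
    case True then show ?thesis using Cons by simp
  next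
    case False
    then have "v = x" using Cons by simp
    then show ?thesis using process_sig(2)[of B r x S] fold_sig_mono[of B r vs "process B r x S" v]
      by (metis fold_Cons comp_apply order_trans)
  qed
qed

lemma inv_step:
  assumes I: "inv E ts s S" and st: "bfs_step E S S'" and fin: "finite E"
  shows "inv E ts s S'"
proof -
  obtain r rest vs where q: "que S = r # rest" and vs: "distinct vs" "set vs = targets (Bset E S r)"
    and S': "S' = fold (process (Bset E S r) r) vs (S\<lparr>que := rest\<rparr>)"
    using st unfolding bfs_step_def by blast
  define B where "B = Bset E S r"
  define R0 where "R0 = recs S ! r"
  define S1 where "S1 = S\<lparr>que := rest\<rparr>"
  have Id: "recs S \<noteq> []" "recs S ! 0 = root s ts" "distinct (que S)"
    "\<forall>q\<in>set (que S). q < length (recs S)" "Sound E ts s S"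
    "sorted (map (\<lambda>q. rlev (recs S ! q)) (que S))"
    "\<forall>k<length (recs S). \<forall>q\<in>set (que S). rlev (recs S ! k) \<le> Suc (rlev (recs S ! q))"
    "Dp S" "Gp S" "Fp S" "\<forall>i<length (recs S). i \<notin> set (que S) \<longrightarrow> Cr E S i"
    using I unfolding inv_def by auto
  have Bsub: "B \<subseteq> {e\<in>E. esrc e = rv R0 \<and> rtime R0 \<le> etime e}"
    unfolding B_def Bset_def R0_def by auto
  have J1: "J E ts s r R0 S1"
  proof -
    have "r < length (recs S)" using Id(4) q by simp
    moreover have "r \<notin> set rest" "distinct rest" using Id(3) q by auto
    moreover have "sorted (map (\<lambda>q. rlev (recs S ! q)) rest)"
      "\<forall>q\<in>set rest. rlev R0 \<le> rlev (recs S ! q)"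
      using Id(6) q unfolding R0_def by auto
    moreover have "\<forall>k<length (recs S). rlev (recs S ! k) \<le> Suc (rlev R0)"
      using Id(7) q unfolding R0_def by auto
    moreover have "\<forall>i<length (recs S). i \<noteq> r \<and> i \<notin> set rest \<longrightarrow> Cr E S i"
      using Id(11) q by auto
    moreover have "Dp S1 = Dp S" "Gp S1 = Gp S" "Fp S1 = Fp S" "Sound E ts s S1 = Sound E ts s S"
      "\<And>i. Cr E S1 i = Cr E S i"
      unfolding S1_def Dp_def Gp_def Fp_def Sound_def Cr_def by simp_all
    ultimately show ?thesis using Id q unfolding J_def S1_def R0_def by auto
  qed
  have J2: "J E ts s r R0 S'"
    unfolding S' B_def[symmetric] S1_def[symmetric]
    using fold_J[OF J1 fin _ Bsub] vs(2) B_def by simp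
  have Jd: "recs S' \<noteq> []" "recs S' ! 0 = root s ts" "distinct (que S')"
    "\<forall>q\<in>set (que S'). q < length (recs S')" "r < length (recs S')" "r \<notin> set (que S')"
    "recs S' ! r = R0" "Sound E ts s S'"
    "sorted (map (\<lambda>q. rlev (recs S' ! q)) (que S'))"
    "\<forall>k<length (recs S'). rlev (recs S' ! k) \<le> Suc (rlev R0)"
    "\<forall>q\<in>set (que S'). rlev R0 \<le> rlev (recs S' ! q)" "Dp S'" "Gp S'" "Fp S'"
    "\<forall>i<length (recs S'). i \<noteq> r \<and> i \<notin> set (que S') \<longrightarrow> Cr E S' i"
    using J2 unfolding J_def by auto
  have Cr: "Cr E S' r" unfolding Cr_def
  proof (intro ballI impI)
    fix e assume e: "e \<in> E" "esrc e = rv (recs S' ! r) \<and> rtime (recs S' ! r) \<le> etime e"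
    have "sig S' (etgt e) \<le> ereal (etime e)"
    proof (cases "e \<in> trav S")
      case True
      then have "sig S (etgt e) \<le> ereal (etime e)" using Id(10) unfolding Fp_def by auto
      moreover have "sig S' (etgt e) \<le> sig S1 (etgt e)"
        unfolding S' B_def[symmetric] S1_def[symmetric] by (rule fold_sig_mono)
      ultimately show ?thesis unfolding S1_def by simp
    next
      case False
      then have eB: "e \<in> B" using e Jd(7) unfolding B_def Bset_def R0_def by auto
      then have "etgt e \<in> set vs" using vs(2) B_def unfolding targets_def by auto
      then have "sig S' (etgt e) \<le> ereal (mintime B (etgt e))"
        unfolding S' B_def[symmetric] by (rule fold_sig_v)
      moreover have "finite B" using Bsub fin by (metis (no_types, lifting) finite_subset mem_Collect_eq subsetI)
      then have "mintime B (etgt e) \<le> etime e" using eB by (rule mintime_le)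
      ultimately show ?thesis by (meson ereal_less_eq(3) order_trans)
    qed
    then obtain j where "j < length (recs S')" "rv (recs S' ! j) = etgt e" "rtime (recs S' ! j) \<le> etime e"
      using Jd(12) unfolding Dp_def by blast
    then show "\<exists>j<length (recs S'). rv (recs S' ! j) = etgt e \<and> rlev (recs S' ! j) \<le> Suc (rlev (recs S' ! r))
        \<and> rtime (recs S' ! j) \<le> etime e"
      using Jd(10) Jd(7) by auto
  qed
  have I4: "\<forall>k<length (recs S'). \<forall>q\<in>set (que S'). rlev (recs S' ! k) \<le> Suc (rlev (recs S' ! q))"
    using Jd(10) Jd(11) by fastforce
  have C: "\<forall>i<length (recs S'). i \<notin> set (que S') \<longrightarrow> Cr E S' i"
    using Jd(15) Cr by metis
  show ?thesis unfolding inv_def using Jd I4 C by blast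
qed

lemma inv_init: "inv E ts s (bfs_init s ts)"
proof -
  define S0 where "S0 = bfs_init s ts"
  have r: "recs S0 = [root s ts]" "que S0 = [0]" "sig S0 = (\<lambda>x. \<infinity>)(s := ereal ts)" "trav S0 = {}"
    unfolding S0_def bfs_init_def root_def by simp_all
  have "Dp S0" unfolding Dp_def r
  proof (intro allI impI)
    fix x t assume h: "((\<lambda>x. \<infinity>)(s := ereal ts)) x \<le> ereal t"
    have "x = s" using h by (cases "x = s") auto
    then have "ts \<le> t" using h by simp
    then show "\<exists>j<length [root s ts]. rv ([root s ts] ! j) = x \<and> rtime ([root s ts] ! j) \<le> t"
      using \<open>x = s\<close> by (intro exI[of _ 0]) (simp add: root_def)
  qed
  moreover have "Gp S0" unfolding Gp_def r by (simp add: root_def)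
  moreover have "Fp S0" unfolding Fp_def r by simp
  moreover have "Sound E ts s S0" unfolding Sound_def r by (simp add: root_def good_def)
  moreover have "\<forall>k<length (recs S0). \<forall>q\<in>set (que S0). rlev (recs S0 ! k) \<le> Suc (rlev (recs S0 ! q))"
    unfolding r by (simp add: root_def)
  moreover have "\<forall>i<length (recs S0). i \<notin> set (que S0) \<longrightarrow> Cr E S0 i" unfolding r by simp
  moreover have "recs S0 \<noteq> [] \<and> recs S0 ! 0 = root s ts \<and>
    distinct (que S0) \<and> (\<forall>q\<in>set (que S0). q < length (recs S0)) \<and>
    sorted (map (\<lambda>q. rlev (recs S0 ! q)) (que S0))" unfolding r by simp
  ultimately have "inv E ts s S0" unfolding inv_def by blast
  then show ?thesis unfolding S0_def .
qed

lemma inv_reach: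
  assumes "(bfs_step E)\<^sup>*\<^sup>* (bfs_init s ts) S" "finite E"
  shows "inv E ts s S"
  using assms(1)
proof (induction rule: rtranclp_induct)
  case base then show ?case by (rule inv_init)
next
  case (step y z) then show ?case using inv_step[OF _ _ assms(2)] by blast
qed

lemma chain:
  assumes I: "inv E ts s S" and q: "que S = []" and P: "temporal_path E ts s y P"
  shows "i < length P \<Longrightarrow> \<exists>j<length (recs S). rv (recs S ! j) = etgt (P ! i) \<and> rlev (recs S ! j) \<le> Suc i
      \<and> rtime (recs S ! j) \<le> etime (P ! i)"
proof (induction i)
  have C: "\<forall>i<length (recs S). Cr E S i" using I q unfolding inv_def by auto
  have r0: "recs S \<noteq> []" "recs S ! 0 = root s ts" using I unfolding inv_def by auto
  {
    case 0
    have ne: "P \<noteq> []" and h: "esrc (P ! 0) = s" "ts \<le> etime (P ! 0)" "P ! 0 \<in> E"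
      using P unfolding temporal_path_def by (auto simp: hd_conv_nth)
    have "Cr E S 0" using C r0 by auto
    then show ?case using h r0 unfolding Cr_def root_def by auto
  next
    case (Suc i)
    then obtain j where j: "j < length (recs S)" "rv (recs S ! j) = etgt (P ! i)" "rlev (recs S ! j) \<le> Suc i"
      "rtime (recs S ! j) \<le> etime (P ! i)" by auto
    have h: "etgt (P ! i) = esrc (P ! Suc i)" "etime (P ! i) \<le> etime (P ! Suc i)" "P ! Suc i \<in> E"
      using P Suc.prems unfolding temporal_path_def by auto
    have "Cr E S j" using C j by auto
    then obtain j' where "j' < length (recs S)" "rv (recs S ! j') = etgt (P ! Suc i)"
      "rlev (recs S ! j') \<le> Suc (rlev (recs S ! j))" "rtime (recs S ! j') \<le> etime (P ! Suc i)"
      unfolding Cr_def using h j by fastforce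
    then show ?case using j(3) by (intro exI[of _ j']) auto
  }
qed

theorem lemma12:
  fixes V :: "'v set" and E :: "'v tedge set" and s v :: 'v and ts :: real and S :: "'v bfs_state"
  assumes "finite V" and "finite E"
    and "\<forall>(x, y, t) \<in> E. x \<in> V \<and> y \<in> V \<and> x \<noteq> y"
    and "s \<in> V"
    and "(bfs_step E)\<^sup>*\<^sup>* (bfs_init s ts) S" and "que S = []"
    and "v \<noteq> s" and "t_reachable E ts s v"
  shows "occ_levels S v \<noteq> {} \<and> Min (occ_levels S v) = tdist E ts s v"
proof -
  have I: "inv E ts s S" by (rule inv_reach[OF assms(5) assms(2)])
  define k where "k = tdist E ts s v"
  have ex: "\<exists>k P. temporal_path E ts s v P \<and> length P = k" using assms(8) unfolding t_reachable_def by blast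
  have "\<exists>P. temporal_path E ts s v P \<and> length P = k"
    unfolding k_def tdist_def using ex by (rule LeastI_ex)
  then obtain P where P: "temporal_path E ts s v P" "length P = k" by blast
  have ne: "P \<noteq> []" using P unfolding temporal_path_def by auto
  then have "length P - 1 < length P" by simp
  from chain[OF I assms(6) P(1) this] obtain j where j: "j < length (recs S)"
    "rv (recs S ! j) = etgt (P ! (length P - 1))" "rlev (recs S ! j) \<le> Suc (length P - 1)" by blast
  have "etgt (P ! (length P - 1)) = v" using P ne unfolding temporal_path_def by (simp add: last_conv_nth)
  then have jv: "rv (recs S ! j) = v" using j(2) by simp
  have jin: "rlev (recs S ! j) \<in> occ_levels S v"
    unfolding occ_levels_def using j(1) jv by blast
  have jk: "rlev (recs S ! j) \<le> k" using j(3) P(2) ne by (cases k) auto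
  have fin: "finite (occ_levels S v)"
  proof -
    have "occ_levels S v \<subseteq> (\<lambda>i. rlev (recs S ! i)) ` {..<length (recs S)}"
      unfolding occ_levels_def by auto
    then show ?thesis by (rule finite_subset) simp
  qed
  have lb: "\<forall>l\<in>occ_levels S v. k \<le> l"
  proof
    fix l assume "l \<in> occ_levels S v"
    then obtain i where i: "i < length (recs S)" "rv (recs S ! i) = v" "l = rlev (recs S ! i)"
      unfolding occ_levels_def by auto
    have "good E ts s l v (rtime (recs S ! i))" using I i unfolding inv_def Sound_def by metis
    then obtain Q where "temporal_path E ts s v Q" "length Q = l" using assms(7) unfolding good_def by auto
    then have "\<exists>P. temporal_path E ts s v P \<and> length P = l" by blast
    then show "k \<le> l" unfolding k_def tdist_def by (rule Least_le)
  qed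
  have ne2: "occ_levels S v \<noteq> {}" using jin by auto
  have "Min (occ_levels S v) \<le> k" using Min_le[OF fin jin(1)] jk by simp
  moreover have "k \<le> Min (occ_levels S v)" using lb Min_in[OF fin ne2] by blast
  ultimately show ?thesis using ne2 k_def by simp
qed

end
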